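(* Let $f$ be a convex function on $[0,\infty)$ with $f(1)=1$ such that $g(x)=x^2f''(x)$ satisfies $g\ge0$ and $x^2g''(x)-g(\alpha)g(x/\alpha)\le0$ for all $x\ge0$, $\alpha>0$. Assume furthermore that $f(x)\ge c x^s$ for all $x\ge0$, for some $c>0$ and $s>1$. Then for all distributions $p_X\ll q_X$ on a finite set, $$D_{\mathrm{KL}}(p_X\|q_X)\le \frac{\log\big(1+D_{\hat f}(p_X\|q_X)\big)}{s-1},\qquad \hat f=f-1,$$ equivalently $\sum_x q_X(x) f\big(p_X(x)/q_X(x)\big)\ge e^{(s-1)D_{\mathrm{KL}}(p_X\|q_X)}$.
   Context: For distributions $p\ll q$ on a finite set and a function $h$ on $[0,\infty)$, $D_h(p\|q)=\sum_x q(x)h(p(x)/q(x))$ with $0h(0/0)=0$. $D_{\mathrm{KL}}$ is the Kullback–Leibler divergence (natural logarithm). *)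

theory Defs
  imports "HOL-Analysis.Analysis"
begin

definition is_dist :: "('a::finite \<Rightarrow> real) \<Rightarrow> bool" where
  "is_dist p \<longleftrightarrow> (\<forall>x. p x \<ge> 0) \<and> (\<Sum>x\<in>UNIV. p x) = 1"

definition abs_cont :: "('a \<Rightarrow> real) \<Rightarrow> ('a \<Rightarrow> real) \<Rightarrow> bool" where
  "abs_cont p q \<longleftrightarrow> (\<forall>x. q x = 0 \<longrightarrow> p x = 0)"

definition fdiv :: "(real \<Rightarrow> real) \<Rightarrow> ('a::finite \<Rightarrow> real) \<Rightarrow> ('a \<Rightarrow> real) \<Rightarrow> real" where
  "fdiv h p q = (\<Sum>x\<in>UNIV. if q x = 0 then 0 else q x * h (p x / q x))"

definition KL :: "('a::finite \<Rightarrow> real) \<Rightarrow> ('a \<Rightarrow> real) \<Rightarrow> real" where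
  "KL p q = (\<Sum>x\<in>UNIV. if p x = 0 then 0 else p x * ln (p x / q x))"

end

theory Submission
  imports Defs
begin


definition EL :: "(real \<times> real) list \<Rightarrow> (real \<Rightarrow> real) \<Rightarrow> real" where
  "EL L \<phi> = sum_list (map (\<lambda>(w,r). w * \<phi> r) L)"

definition validL :: "(real \<times> real) list \<Rightarrow> bool" where
  "validL L \<longleftrightarrow> (\<forall>(w,r)\<in>set L. 0 \<le> w \<and> 0 < r) \<and> EL L (\<lambda>_. 1) = 1 \<and> EL L (\<lambda>r. r) = 1"

definition prodL :: "(real \<times> real) list \<Rightarrow> (real \<times> real) list \<Rightarrow> (real \<times> real) list" where
  "prodL L1 L2 = concat (map (\<lambda>(w2,r2). map (\<lambda>(w1,r1). (w1*w2, r1*r2)) L1) L2)"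

lemma EL_Nil[simp]: "EL [] \<phi> = 0" by (simp add: EL_def)
lemma EL_Cons[simp]: "EL ((w,r)#L) \<phi> = w * \<phi> r + EL L \<phi>" by (simp add: EL_def)
lemma EL_append[simp]: "EL (L1 @ L2) \<phi> = EL L1 \<phi> + EL L2 \<phi>" by (simp add: EL_def)

lemma EL_add: "EL L (\<lambda>r. \<phi> r + \<psi> r) = EL L \<phi> + EL L \<psi>"
  by (induction L) (auto simp: algebra_simps)
lemma EL_diff: "EL L (\<lambda>r. \<phi> r - \<psi> r) = EL L \<phi> - EL L \<psi>"
  by (induction L) (auto simp: algebra_simps)
lemma EL_cmult: "EL L (\<lambda>r. c * \<phi> r) = c * EL L \<phi>"
  by (induction L) (auto simp: algebra_simps)
lemma EL_mono: "(\<And>w r. (w,r) \<in> set L \<Longrightarrow> 0 \<le> w \<and> \<phi> r \<le> \<psi> r) \<Longrightarrow> EL L \<phi> \<le> EL L \<psi>"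
proof (induction L)
  case Nil then show ?case by simp
next
  case (Cons a L) then obtain w r where a: "a = (w,r)" by (cases a)
  have "w * \<phi> r \<le> w * \<psi> r" using Cons.prems[of w r] a by (auto intro: mult_left_mono)
  then show ?case using Cons a by (auto intro: add_mono)
qed
lemma EL_cong: "(\<And>w r. (w,r) \<in> set L \<Longrightarrow> \<phi> r = \<psi> r) \<Longrightarrow> EL L \<phi> = EL L \<psi>"
proof (induction L)
  case Nil then show ?case by simp
next
  case (Cons a L) then obtain w r where a: "a = (w,r)" by (cases a)
  have "\<phi> r = \<psi> r" using Cons.prems[of w r] a by simp
  moreover have "EL L \<phi> = EL L \<psi>" using Cons by auto
  ultimately show ?case using a by simp
qed

lemma EL_map_scale: "EL (map (\<lambda>(w1,r1). (w1*w2, r1*r2)) L1) \<phi> = w2 * EL L1 (\<lambda>r1. \<phi> (r1*r2))"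
  by (induction L1) (auto simp: algebra_simps)

lemma EL_prodL: "EL (prodL L1 L2) \<phi> = EL L2 (\<lambda>r2. EL L1 (\<lambda>r1. \<phi> (r1*r2)))"
proof (induction L2)
  case Nil then show ?case by (simp add: prodL_def)
next
  case (Cons a L2) then obtain w r where a: "a = (w,r)" by (cases a)
  have "prodL (a#L2) L1' = prodL (a#L2) L1'" for L1' by simp
  have "prodL L1 (a#L2) = map (\<lambda>(w1,r1). (w1*w, r1*r)) L1 @ prodL L1 L2"
    by (simp add: prodL_def a)
  then show ?case using Cons a by (simp add: EL_map_scale)
qed

lemma EL_deriv:
  assumes "\<And>w r. (w,r) \<in> set L \<Longrightarrow> ((\<lambda>y. F r y) has_real_derivative F' r y) (at y)"
  shows "((\<lambda>y. EL L (\<lambda>r. F r y)) has_real_derivative EL L (\<lambda>r. F' r y)) (at y)"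
  using assms
proof (induction L)
  case Nil then show ?case by simp
next
  case (Cons a L) then obtain w r where a: "a = (w,r)" by (cases a)
  have "((\<lambda>y. w * F r y + EL L (\<lambda>r. F r y)) has_real_derivative w * F' r y + EL L (\<lambda>r. F' r y)) (at y)"
    using Cons a by (auto intro!: derivative_eq_intros)
  then show ?case using a by simp
qed

lemma set_prodL: "x \<in> set (prodL L1 L2) \<Longrightarrow> \<exists>w1 r1 w2 r2. (w1,r1) \<in> set L1 \<and> (w2,r2) \<in> set L2 \<and> x = (w1*w2, r1*r2)"
  by (auto simp: prodL_def)

lemma valid_prodL: assumes "validL L1" "validL L2" shows "validL (prodL L1 L2)"
proof -
  have "\<forall>(w,r)\<in>set (prodL L1 L2). 0 \<le> w \<and> 0 < r"
  proof safe
    fix w r assume "(w,r) \<in> set (prodL L1 L2)"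
    then obtain w1 r1 w2 r2 where "(w1,r1) \<in> set L1" "(w2,r2) \<in> set L2" "w = w1*w2" "r = r1*r2"
      using set_prodL by blast
    moreover have "0 \<le> w1" "0 < r1" using assms(1) \<open>(w1,r1) \<in> set L1\<close> unfolding validL_def by auto
    moreover have "0 \<le> w2" "0 < r2" using assms(2) \<open>(w2,r2) \<in> set L2\<close> unfolding validL_def by auto
    ultimately show "0 \<le> w" "0 < r" by auto
  qed
  moreover have "EL (prodL L1 L2) (\<lambda>_. 1) = 1"
    using assms by (simp add: EL_prodL validL_def)
  moreover have "EL (prodL L1 L2) (\<lambda>r. r) = 1"
  proof -
    have "EL (prodL L1 L2) (\<lambda>r. r) = EL L2 (\<lambda>r2. EL L1 (\<lambda>r1. r2 * r1))"
      by (simp add: EL_prodL mult.commute)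
    also have "\<dots> = EL L2 (\<lambda>r2. r2)" using assms by (simp add: EL_cmult validL_def)
    finally show ?thesis using assms by (simp add: validL_def)
  qed
  ultimately show ?thesis by (simp add: validL_def)
qed

lemma concave_tangent:
  fixes \<phi> \<phi>' \<phi>'' :: "real \<Rightarrow> real"
  assumes "\<And>x. x > 0 \<Longrightarrow> (\<phi> has_real_derivative \<phi>' x) (at x)"
    and "\<And>x. x > 0 \<Longrightarrow> (\<phi>' has_real_derivative \<phi>'' x) (at x)"
    and "\<And>x. x > 0 \<Longrightarrow> \<phi>'' x \<le> 0" and "y > 0"
  shows "\<phi> y \<le> \<phi> 1 + \<phi>' 1 * (y - 1)"
proof -
  have "(\<lambda>x. - \<phi>' x) 1 * (y - 1) \<le> (\<lambda>x. - \<phi> x) y - (\<lambda>x. - \<phi> x) 1"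
  proof (rule f''_imp_f'[of "{0<..}" _ _ "\<lambda>x. - \<phi>'' x"])
    show "convex {0::real<..}" by simp
    show "((\<lambda>x. - \<phi> x) has_real_derivative - \<phi>' x) (at x)" if "x \<in> {0<..}" for x
      using assms(1)[of x] that by (auto intro!: derivative_eq_intros)
    show "((\<lambda>x. - \<phi>' x) has_real_derivative - \<phi>'' x) (at x)" if "x \<in> {0<..}" for x
      using assms(2)[of x] that by (auto intro!: derivative_eq_intros)
  qed (use assms in auto)
  then show ?thesis by (simp add: algebra_simps)
qed



lemma submult:
  fixes f f1 f2 g g1 g2 :: "real \<Rightarrow> real"
  assumes df: "\<And>x. x > 0 \<Longrightarrow> (f has_real_derivative f1 x) (at x)"
    and ddf: "\<And>x. x > 0 \<Longrightarrow> (f1 has_real_derivative f2 x) (at x)"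
    and dg: "\<And>x. x > 0 \<Longrightarrow> (g has_real_derivative g1 x) (at x)"
    and ddg: "\<And>x. x > 0 \<Longrightarrow> (g1 has_real_derivative g2 x) (at x)"
    and gdef: "\<And>x. x > 0 \<Longrightarrow> g x = x\<^sup>2 * f2 x"
    and gc: "\<And>x a. x > 0 \<Longrightarrow> a > 0 \<Longrightarrow> x\<^sup>2 * g2 x \<le> g a * g (x / a)"
    and f1: "f 1 = 1"
    and V1: "validL L1" and V2: "validL L2"
  shows "EL (prodL L1 L2) f \<le> EL L1 f * EL L2 f"
proof -
  define D where "D = EL L1 f"
  have pos1: "0 \<le> w \<and> 0 < r" if "(w,r) \<in> set L1" for w r using V1 that unfolding validL_def by auto
  have pos2: "0 \<le> w \<and> 0 < r" if "(w,r) \<in> set L2" for w r using V2 that unfolding validL_def by auto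
  have B: "EL L1 (\<lambda>r. g (r*y)) \<le> g y * D" if y: "y > 0" for y
  proof -
    define h where "h r = g (r*y) - g y * f r" for r
    define h' where "h' r = g1 (r*y) * y - g y * f1 r" for r
    define h'' where "h'' r = g2 (r*y) * y * y - g y * f2 r" for r
    have tan: "h r \<le> h 1 + h' 1 * (r - 1)" if r: "r > 0" for r
    proof (rule concave_tangent[OF _ _ _ r])
      show "(h has_real_derivative h' x) (at x)" if "x > 0" for x
        unfolding h_def[abs_def] h'_def using that y
        by (auto intro!: derivative_eq_intros DERIV_chain2[OF dg] df)
      show "(h' has_real_derivative h'' x) (at x)" if "x > 0" for x
        unfolding h'_def[abs_def] h''_def using that y
        by (auto intro!: derivative_eq_intros DERIV_chain2[OF ddg] ddf)
      show "h'' x \<le> 0" if x: "x > 0" for x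
      proof -
        have "x\<^sup>2 * h'' x = (x*y)\<^sup>2 * g2 (x*y) - g y * g x"
          unfolding h''_def using gdef[OF x] by (simp add: algebra_simps power2_eq_square)
        also have "\<dots> \<le> 0" using gc[of "x*y" x] x y by (simp add: mult.commute)
        finally have "x\<^sup>2 * h'' x \<le> 0" .
        moreover have "x\<^sup>2 > 0" using x by simp
        ultimately show ?thesis by (simp add: mult_le_0_iff)
      qed
    qed
    have h1: "h 1 = 0" unfolding h_def using f1 by simp
    have "EL L1 h \<le> EL L1 (\<lambda>r. h' 1 * (r - 1))"
      by (rule EL_mono) (use pos1 tan h1 in auto)
    also have "\<dots> = 0" using V1 by (simp add: EL_cmult EL_diff validL_def)
    finally have "EL L1 h \<le> 0" .
    moreover have "EL L1 h = EL L1 (\<lambda>r. g (r*y)) - g y * D"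
      unfolding h_def D_def by (simp add: EL_diff EL_cmult)
    ultimately show ?thesis by simp
  qed
  define \<Psi> where "\<Psi> y = EL L1 (\<lambda>r. f (r*y)) - D * f y" for y
  define \<Psi>' where "\<Psi>' y = EL L1 (\<lambda>r. f1 (r*y) * r) - D * f1 y" for y
  define \<Psi>'' where "\<Psi>'' y = EL L1 (\<lambda>r. f2 (r*y) * r * r) - D * f2 y" for y
  have tan: "\<Psi> y \<le> \<Psi> 1 + \<Psi>' 1 * (y - 1)" if y: "y > 0" for y
  proof (rule concave_tangent[OF _ _ _ y])
    show "(\<Psi> has_real_derivative \<Psi>' x) (at x)" if x: "x > 0" for x
    proof -
      have "((\<lambda>y. EL L1 (\<lambda>r. f (r*y))) has_real_derivative EL L1 (\<lambda>r. f1 (r*x) * r)) (at x)"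
        by (rule EL_deriv) (use pos1 x in \<open>auto intro!: derivative_eq_intros DERIV_chain2[OF df]\<close>)
      then show ?thesis unfolding \<Psi>_def[abs_def] \<Psi>'_def
        using x by (auto intro!: derivative_eq_intros df)
    qed
    show "(\<Psi>' has_real_derivative \<Psi>'' x) (at x)" if x: "x > 0" for x
    proof -
      have "((\<lambda>y. EL L1 (\<lambda>r. f1 (r*y) * r)) has_real_derivative EL L1 (\<lambda>r. f2 (r*x) * r * r)) (at x)"
        by (rule EL_deriv) (use pos1 x in \<open>auto intro!: derivative_eq_intros DERIV_chain2[OF ddf]\<close>)
      then show ?thesis unfolding \<Psi>'_def[abs_def] \<Psi>''_def
        using x by (auto intro!: derivative_eq_intros ddf)
    qed
    show "\<Psi>'' x \<le> 0" if x: "x > 0" for x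
    proof -
      have "x\<^sup>2 * \<Psi>'' x = EL L1 (\<lambda>r. (r*x)\<^sup>2 * f2 (r*x)) - D * (x\<^sup>2 * f2 x)"
        unfolding \<Psi>''_def by (simp add: algebra_simps power2_eq_square EL_cmult[symmetric])
      also have "\<dots> = EL L1 (\<lambda>r. g (r*x)) - D * g x"
      proof -
        have "EL L1 (\<lambda>r. (r*x)\<^sup>2 * f2 (r*x)) = EL L1 (\<lambda>r. g (r*x))"
        proof (rule EL_cong)
          fix w r assume "(w,r) \<in> set L1"
          then have "r * x > 0" using pos1 x by auto
          then show "(r*x)\<^sup>2 * f2 (r*x) = g (r*x)" using gdef by simp
        qed
        then show ?thesis using gdef[OF x] by simp
      qed
      also have "\<dots> \<le> 0" using B[OF x] by (simp add: mult.commute)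
      finally have "x\<^sup>2 * \<Psi>'' x \<le> 0" .
      moreover have "x\<^sup>2 > 0" using x by simp
      ultimately show ?thesis by (simp add: mult_le_0_iff)
    qed
  qed
  have P1: "\<Psi> 1 = 0" unfolding \<Psi>_def D_def using f1 by simp
  have "EL L2 \<Psi> \<le> EL L2 (\<lambda>r. \<Psi>' 1 * (r - 1))"
    by (rule EL_mono) (use pos2 tan P1 in auto)
  also have "\<dots> = 0" using V2 by (simp add: EL_cmult EL_diff validL_def)
  finally have "EL L2 \<Psi> \<le> 0" .
  moreover have "EL L2 \<Psi> = EL (prodL L1 L2) f - D * EL L2 f"
    unfolding \<Psi>_def by (simp add: EL_diff EL_cmult EL_prodL)
  ultimately show ?thesis unfolding D_def by simp
qed



primrec powL :: "(real \<times> real) list \<Rightarrow> nat \<Rightarrow> (real \<times> real) list" where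
  "powL L 0 = [(1,1)]"
| "powL L (Suc n) = prodL (powL L n) L"

lemma valid_powL: "validL L \<Longrightarrow> validL (powL L n)"
proof (induction n)
  case 0 then show ?case by (simp add: validL_def)
next
  case (Suc n) then show ?case by (simp add: valid_prodL)
qed

lemma EL_powL_powr:
  assumes V: "validL L" and s: "s \<ge> 0"
  shows "EL (powL L n) (\<lambda>r. r powr s) = (EL L (\<lambda>r. r powr s))^n"
proof (induction n)
  case 0 then show ?case by simp
next
  case (Suc n)
  have VP: "validL (powL L n)" using valid_powL[OF V] .
  have "EL (powL L (Suc n)) (\<lambda>r. r powr s) = EL L (\<lambda>r2. EL (powL L n) (\<lambda>r1. (r1*r2) powr s))"
    by (simp add: EL_prodL)
  also have "\<dots> = EL L (\<lambda>r2. r2 powr s * EL (powL L n) (\<lambda>r1. r1 powr s))"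
  proof (rule EL_cong)
    fix w2 r2 assume "(w2,r2) \<in> set L"
    then have r2: "r2 > 0" using V unfolding validL_def by auto
    have "EL (powL L n) (\<lambda>r1. (r1*r2) powr s) = EL (powL L n) (\<lambda>r1. r2 powr s * r1 powr s)"
    proof (rule EL_cong)
      fix w r1 assume "(w,r1) \<in> set (powL L n)"
      then have "r1 > 0" using VP unfolding validL_def by auto
      then show "(r1*r2) powr s = r2 powr s * r1 powr s" using r2 by (simp add: powr_mult)
    qed
    then show "EL (powL L n) (\<lambda>r1. (r1*r2) powr s) = r2 powr s * EL (powL L n) (\<lambda>r1. r1 powr s)"
      by (simp add: EL_cmult)
  qed
  also have "\<dots> = EL (powL L n) (\<lambda>r1. r1 powr s) * EL L (\<lambda>r2. r2 powr s)"
    by (subst mult.commute) (simp add: EL_cmult)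
  finally show ?case using Suc by simp
qed

lemma list_main:
  fixes f f1 f2 g g1 g2 :: "real \<Rightarrow> real"
  assumes df: "\<And>x. x > 0 \<Longrightarrow> (f has_real_derivative f1 x) (at x)"
    and ddf: "\<And>x. x > 0 \<Longrightarrow> (f1 has_real_derivative f2 x) (at x)"
    and dg: "\<And>x. x > 0 \<Longrightarrow> (g has_real_derivative g1 x) (at x)"
    and ddg: "\<And>x. x > 0 \<Longrightarrow> (g1 has_real_derivative g2 x) (at x)"
    and gdef: "\<And>x. x > 0 \<Longrightarrow> g x = x\<^sup>2 * f2 x"
    and gc: "\<And>x a. x > 0 \<Longrightarrow> a > 0 \<Longrightarrow> x\<^sup>2 * g2 x \<le> g a * g (x / a)"
    and f1: "f 1 = 1"
    and c: "c > 0" and s: "s \<ge> 0" and lower: "\<And>x. x > 0 \<Longrightarrow> c * x powr s \<le> f x"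
    and V: "validL L"
  shows "EL L (\<lambda>r. r powr s) \<le> EL L f"
proof (rule ccontr)
  define A where "A = EL L f"
  define B where "B = EL L (\<lambda>r. r powr s)"
  assume "\<not> ?thesis"
  then have AB: "A < B" unfolding A_def B_def by simp
  have fnn: "0 \<le> f x" if x: "x > 0" for x
  proof -
    have "0 \<le> c * x powr s" using c by simp
    then show ?thesis using lower[OF x] by linarith
  qed
  have "EL L (\<lambda>_. 0) \<le> EL L f"
    by (rule EL_mono) (use V fnn in \<open>auto simp: validL_def\<close>)
  then have A0: "0 \<le> A" unfolding A_def using EL_cmult[of L 0 "\<lambda>_. 0"] by simp
  have pw: "EL (powL L n) f \<le> A^n" for n
  proof (induction n)
    case 0 then show ?case using f1 by simp
  next
    case (Suc n)
    have "EL (powL L (Suc n)) f \<le> EL (powL L n) f * A"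
      unfolding A_def powL.simps by (rule submult[OF df ddf dg ddg gdef gc f1 valid_powL[OF V] V])
    also have "\<dots> \<le> A^n * A" using Suc A0 by (rule mult_right_mono)
    finally show ?case by (simp add: mult.commute)
  qed
  have lw: "c * B^n \<le> A^n" for n
  proof -
    have "c * B^n = EL (powL L n) (\<lambda>r. c * r powr s)"
      unfolding B_def by (simp add: EL_cmult EL_powL_powr[OF V s])
    also have "\<dots> \<le> EL (powL L n) f"
      by (rule EL_mono) (use valid_powL[OF V, of n] lower in \<open>auto simp: validL_def\<close>)
    finally show ?thesis using pw[of n] by simp
  qed
  have B0: "B > 0" using A0 AB by simp
  have "A / B < 1" using AB B0 by simp
  then obtain n where n: "(A/B)^n < c" using real_arch_pow_inv[OF c] by blast
  have "(A/B)^n = A^n / B^n" by (simp add: power_divide)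
  then have "A^n < c * B^n" using n B0 by (simp add: divide_less_eq)
  then show False using lw[of n] by simp
qed



lemma EL_map2: "EL (map (\<lambda>(w,r). (w, h r)) L) \<phi> = EL L (\<lambda>r. \<phi> (h r))"
  by (induction L) auto

lemma perturb:
  fixes f :: "real \<Rightarrow> real"
  assumes conv: "convex_on {0..} f" and f1: "f 1 = 1" and s: "s \<ge> 0"
    and pos: "\<And>w r. (w,r) \<in> set L0 \<Longrightarrow> 0 \<le> w \<and> 0 \<le> r"
    and E1: "EL L0 (\<lambda>_. 1) = 1" and Er: "EL L0 (\<lambda>r. r) = 1"
    and H: "\<And>L. validL L \<Longrightarrow> EL L (\<lambda>r. r powr s) \<le> EL L f"
  shows "EL L0 (\<lambda>r. r powr s) \<le> EL L0 f"
proof -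
  define A where "A = EL L0 f"
  define B where "B = EL L0 (\<lambda>r. r powr s)"
  have key: "(1-e) powr s * B \<le> (1-e) * A + e" if e: "0 < e" "e < 1" for e
  proof -
    define Le where "Le = map (\<lambda>(w,r). (w, (1-e)*r+e)) L0"
    have V: "validL Le"
    proof -
      have "\<forall>(w,r)\<in>set Le. 0 \<le> w \<and> 0 < r"
      proof safe
        fix w r assume "(w,r) \<in> set Le"
        then obtain r0 where "(w,r0) \<in> set L0" "r = (1-e)*r0+e" unfolding Le_def by auto
        then show "0 \<le> w" "0 < r" using pos[of w r0] e
          by (auto intro!: add_nonneg_pos mult_nonneg_nonneg)
      qed
      moreover have "EL Le (\<lambda>_. 1) = 1" unfolding Le_def EL_map2 using E1 by simp
      moreover have "EL Le (\<lambda>r. r) = 1"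
      proof -
        have "EL Le (\<lambda>r. r) = EL L0 (\<lambda>r. (1-e)*r + e * 1)" unfolding Le_def EL_map2 by simp
        also have "\<dots> = (1-e) * EL L0 (\<lambda>r. r) + e * EL L0 (\<lambda>_. 1)"
          by (simp only: EL_add EL_cmult)
        finally show ?thesis using E1 Er by simp
      qed
      ultimately show ?thesis unfolding validL_def by blast
    qed
    have "(1-e) powr s * B = EL L0 (\<lambda>r. (1-e) powr s * r powr s)" unfolding B_def by (simp add: EL_cmult)
    also have "\<dots> \<le> EL L0 (\<lambda>r. ((1-e)*r+e) powr s)"
    proof (rule EL_mono)
      fix w r assume "(w,r) \<in> set L0"
      then have r: "0 \<le> w" "0 \<le> r" using pos by auto
      have "(1-e) powr s * r powr s = ((1-e)*r) powr s" using r e by (simp add: powr_mult)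
      also have "\<dots> \<le> ((1-e)*r+e) powr s" using r e s by (intro powr_mono2) auto
      finally show "0 \<le> w \<and> (1-e) powr s * r powr s \<le> ((1-e)*r+e) powr s" using r by simp
    qed
    also have "\<dots> = EL Le (\<lambda>r. r powr s)" unfolding Le_def EL_map2 by simp
    also have "\<dots> \<le> EL Le f" by (rule H[OF V])
    also have "\<dots> = EL L0 (\<lambda>r. f ((1-e)*r+e))" unfolding Le_def EL_map2 by simp
    also have "\<dots> \<le> EL L0 (\<lambda>r. (1-e) * f r + e * 1)"
    proof (rule EL_mono)
      fix w r assume "(w,r) \<in> set L0"
      then have r: "0 \<le> w" "0 \<le> r" using pos by auto
      have "f ((1 - e) *\<^sub>R r + e *\<^sub>R 1) \<le> (1 - e) * f r + e * f 1"
        by (rule convex_onD[OF conv]) (use e r in auto)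
      then show "0 \<le> w \<and> f ((1-e)*r+e) \<le> (1-e) * f r + e * 1" using r f1 by simp
    qed
    also have "\<dots> = (1-e) * A + e" unfolding A_def by (simp only: EL_add EL_cmult E1)
    finally show ?thesis .
  qed
  have "B \<le> A"
  proof (rule tendsto_le[of "at_right (0::real)" "\<lambda>e. (1-e) * A + e" A "\<lambda>e. (1-e) powr s * B" B])
    show "\<not> trivial_limit (at_right (0::real))" by simp
    have "((\<lambda>e. (1-e) * A + e) \<longlongrightarrow> (1-0) * A + 0) (at_right 0)"
      by (intro tendsto_intros)
    then show "((\<lambda>e. (1-e) * A + e) \<longlongrightarrow> A) (at_right 0)" by simp
    have "((\<lambda>e. (1-e) powr s * B) \<longlongrightarrow> (1-0) powr s * B) (at_right 0)"
      by (intro tendsto_intros) auto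
    then show "((\<lambda>e. (1-e) powr s * B) \<longlongrightarrow> B) (at_right 0)" by simp
    show "\<forall>\<^sub>F e in at_right 0. (1-e) powr s * B \<le> (1-e) * A + e"
      using eventually_at_right_real[of "0::real" 1] by (rule eventually_mono) (use key in auto)
  qed
  then show ?thesis unfolding A_def B_def .
qed



lemma EL_xs:
  assumes "distinct xs" "set xs = (UNIV :: 'a::finite set)"
  shows "EL (map (\<lambda>x. (q x, \<rho> x)) xs) \<phi> = (\<Sum>x\<in>UNIV. q x * \<phi> (\<rho> x))"
proof -
  have "EL (map (\<lambda>x. (q x, \<rho> x)) xs) \<phi> = sum_list (map (\<lambda>x. q x * \<phi> (\<rho> x)) xs)"
    by (simp add: EL_def comp_def)
  also have "\<dots> = (\<Sum>x\<in>set xs. q x * \<phi> (\<rho> x))" using assms(1) by (rule sum_list_distinct_conv_sum_set)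
  finally show ?thesis using assms(2) by simp
qed

theorem theorem8:
  fixes f :: "real \<Rightarrow> real" and c s :: real
    and p q :: "'a::finite \<Rightarrow> real"
  defines "g \<equiv> (\<lambda>x. x\<^sup>2 * deriv (deriv f) x)"
  assumes conv: "convex_on {0..} f"
    and f1: "f 1 = 1"
    and df: "\<forall>x>0. (f has_real_derivative deriv f x) (at x)"
    and ddf: "\<forall>x>0. (deriv f has_real_derivative deriv (deriv f) x) (at x)"
    and dg: "\<forall>x>0. (g has_real_derivative deriv g x) (at x)"
    and ddg: "\<forall>x>0. (deriv g has_real_derivative deriv (deriv g) x) (at x)"
    and g_nonneg: "\<forall>x\<ge>0. g x \<ge> 0"
    and g_cond: "\<forall>x\<ge>0. \<forall>\<alpha>>0. x\<^sup>2 * deriv (deriv g) x - g \<alpha> * g (x / \<alpha>) \<le> 0"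
    and c_pos: "c > 0" and s_gt: "s > 1"
    and lower: "\<forall>x\<ge>0. f x \<ge> c * x powr s"
    and p: "is_dist p" and q: "is_dist q" and ac: "abs_cont p q"
  shows "KL p q \<le> ln (1 + fdiv (\<lambda>t. f t - 1) p q) / (s - 1)"
proof -
  have H: "EL L (\<lambda>r. r powr s) \<le> EL L f" if V: "validL L" for L
  proof (rule list_main[of f "deriv f" "deriv (deriv f)" g "deriv g" "deriv (deriv g)"])
    show "\<And>x a. 0 < x \<Longrightarrow> 0 < a \<Longrightarrow> x\<^sup>2 * deriv (deriv g) x \<le> g a * g (x / a)"
      using g_cond by force
    show "\<And>x. 0 < x \<Longrightarrow> c * x powr s \<le> f x" using lower by force
  qed (use df ddf dg ddg f1 c_pos s_gt V in \<open>auto simp: g_def\<close>)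
  obtain xs where xs: "distinct xs" "set xs = (UNIV :: 'a set)"
    using finite_distinct_list[of "UNIV :: 'a set"] by auto
  define \<rho> where "\<rho> x = (if q x = 0 then 0 else p x / q x)" for x
  have pnn: "p x \<ge> 0" for x using p by (simp add: is_dist_def)
  have qnn: "q x \<ge> 0" for x using q by (simp add: is_dist_def)
  have ps: "(\<Sum>x\<in>UNIV. p x) = 1" using p by (simp add: is_dist_def)
  have qs: "(\<Sum>x\<in>UNIV. q x) = 1" using q by (simp add: is_dist_def)
  have qp: "q x * \<rho> x = p x" for x using ac unfolding \<rho>_def abs_cont_def by auto
  have main: "(\<Sum>x\<in>UNIV. q x * \<rho> x powr s) \<le> (\<Sum>x\<in>UNIV. q x * f (\<rho> x))"
  proof -
    have "EL (map (\<lambda>x. (q x, \<rho> x)) xs) (\<lambda>r. r powr s) \<le> EL (map (\<lambda>x. (q x, \<rho> x)) xs) f"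
    proof (rule perturb[OF conv f1])
      show "0 \<le> s" using s_gt by simp
      show "\<And>w r. (w, r) \<in> set (map (\<lambda>x. (q x, \<rho> x)) xs) \<Longrightarrow> 0 \<le> w \<and> 0 \<le> r"
        using pnn qnn by (auto simp: \<rho>_def)
      show "EL (map (\<lambda>x. (q x, \<rho> x)) xs) (\<lambda>_. 1) = 1" using qs by (simp add: EL_xs[OF xs])
      show "EL (map (\<lambda>x. (q x, \<rho> x)) xs) (\<lambda>r. r) = 1" using ps by (simp add: EL_xs[OF xs] qp)
    qed (rule H)
    then show ?thesis by (simp add: EL_xs[OF xs])
  qed
  have fd: "fdiv f p q = (\<Sum>x\<in>UNIV. q x * f (\<rho> x))"
    unfolding fdiv_def by (rule sum.cong) (auto simp: \<rho>_def)
  have fd1: "1 + fdiv (\<lambda>t. f t - 1) p q = fdiv f p q"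
  proof -
    have "fdiv (\<lambda>t. f t - 1) p q = (\<Sum>x\<in>UNIV. (if q x = 0 then 0 else q x * f (p x / q x)) - q x)"
      unfolding fdiv_def by (rule sum.cong) (auto simp: algebra_simps)
    also have "\<dots> = fdiv f p q - 1" unfolding fdiv_def by (simp add: sum_subtractf qs)
    finally show ?thesis by simp
  qed
  define K where "K = KL p q"
  define a where "a = (s - 1) * K"
  have pt: "q x * \<rho> x powr s \<ge> exp a * (p x + (s-1) * (if p x = 0 then 0 else p x * ln (p x / q x)) - a * p x)" for x
  proof (cases "p x = 0")
    case True then show ?thesis using qnn[of x] by simp
  next
    case False
    then have px: "p x > 0" using pnn[of x] by simp
    then have qx: "q x > 0" using ac qnn[of x] unfolding abs_cont_def by (metis less_eq_real_def)
    define t where "t = (s-1) * ln (p x / q x)"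
    have r: "\<rho> x = p x / q x" "p x / q x > 0" using qx px by (auto simp: \<rho>_def)
    have "q x * \<rho> x powr s = q x * ((p x / q x) * (p x / q x) powr (s-1))"
    proof -
      have "(p x / q x) * (p x / q x) powr (s-1) = (p x / q x) powr (1 + (s-1))"
        using r(2) by (intro powr_mult_base) simp
      then show ?thesis using r(1) by simp
    qed
    also have "\<dots> = p x * exp t" using qx r by (simp add: powr_def t_def mult.commute)
    finally have e1: "q x * \<rho> x powr s = p x * exp t" .
    have "exp t = exp a * exp (t - a)" by (simp flip: exp_add)
    also have "\<dots> \<ge> exp a * (1 + (t - a))" by (simp add: exp_ge_add_one_self)
    finally have "p x * exp t \<ge> p x * (exp a * (1 + (t - a)))" using px by simp
    then show ?thesis using e1 False by (simp add: t_def algebra_simps)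
  qed
  have "(\<Sum>x\<in>UNIV. q x * \<rho> x powr s) \<ge> (\<Sum>x\<in>UNIV. exp a * (p x + (s-1) * (if p x = 0 then 0 else p x * ln (p x / q x)) - a * p x))"
    by (rule sum_mono) (rule pt)
  also have "(\<Sum>x\<in>UNIV. exp a * (p x + (s-1) * (if p x = 0 then 0 else p x * ln (p x / q x)) - a * p x))
      = exp a * (1 + (s-1) * K - a)"
  proof -
    let ?I = "\<lambda>x. if p x = 0 then 0 else p x * ln (p x / q x)"
    have "(\<Sum>x\<in>UNIV. p x + (s-1) * ?I x - a * p x) = (\<Sum>x\<in>UNIV. p x) + (\<Sum>x\<in>UNIV. (s-1) * ?I x) - (\<Sum>x\<in>UNIV. a * p x)"
      by (simp only: sum_subtractf sum.distrib)
    also have "\<dots> = 1 + (s-1) * K - a"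
      by (simp only: sum_distrib_left[symmetric] ps K_def KL_def)
    finally have "(\<Sum>x\<in>UNIV. p x + (s-1) * ?I x - a * p x) = 1 + (s-1) * K - a" .
    then show ?thesis by (simp only: sum_distrib_left[symmetric])
  qed
  also have "\<dots> = exp a" by (simp add: a_def)
  finally have "exp a \<le> fdiv f p q" using main fd by simp
  moreover have "0 < exp a" by simp
  ultimately have "0 < fdiv f p q" "exp a \<le> fdiv f p q" by linarith+
  then have "ln (exp a) \<le> ln (fdiv f p q)" by (subst ln_le_cancel_iff) auto
  then have "a \<le> ln (fdiv f p q)" by simp
  then show ?thesis using s_gt fd1 unfolding a_def K_def by (simp add: pos_le_divide_eq mult.commute)
qed


end
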